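(* Let $\mathcal Y$ be a finite set, $L:\mathcal Y\times\mathcal A\to\mathbb R$ a loss function, and $P_Y,Q_Y$ distributions on $\mathcal Y$. (a) If $D_{\chi^2}(P_Y\|Q_Y)\le\beta^2$, then $D_L(P_Y\|Q_Y)=O(\beta)$. (b) If, in addition, $H_L(Y)$ is twice differentiable in $P_Y$, then $D_L(P_Y\|Q_Y)=O(\beta^2)$.
   Context: Minima are assumed attained. A Bayes action $a_P$ of a distribution $P$ on $\mathcal Y$ is a minimizer of $a\mapsto\mathbb E_{Y\sim P}[L(Y,a)]$; $H_L(Y)=\min_{a\in\mathcal A}\mathbb E_{Y\sim P_Y}[L(Y,a)]$, viewed as a function of the probability vector $P_Y$. The $L$-divergence is $D_L(P\|Q)=\mathbb E_{Y\sim P}[L(Y,a_Q)]-\mathbb E_{Y\sim P}[L(Y,a_P)]\ge0$. Neyman's $\chi^2$-divergence is $D_{\chi^2}(P\|Q)=\sum_y\frac{(P(y)-Q(y))^2}{Q(y)}$ ($0^2/0=0$). Big-O is as $\beta\to0$ with $Q_Y$ and $L$ fixed. *)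

theory Defs
  imports "HOL-Analysis.Analysis"
begin

text \<open>Finite outcome space = finite type 'y; action space = type 'a.
  Distributions on 'y are probability vectors in real^'y.\<close>

definition prob_simplex :: "(real ^ 'y::finite) set" where
  "prob_simplex = {p. (\<forall>y. 0 \<le> p $ y) \<and> (\<Sum>y\<in>UNIV. p $ y) = 1}"

definition exp_loss :: "('y::finite \<Rightarrow> 'a \<Rightarrow> real) \<Rightarrow> real ^ 'y \<Rightarrow> 'a \<Rightarrow> real" where
  "exp_loss L p a = (\<Sum>y\<in>UNIV. p $ y * L y a)"

definition bayes_action :: "('y::finite \<Rightarrow> 'a \<Rightarrow> real) \<Rightarrow> real ^ 'y \<Rightarrow> 'a \<Rightarrow> bool" where
  "bayes_action L p a \<longleftrightarrow> (\<forall>b. exp_loss L p a \<le> exp_loss L p b)"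

text \<open>Generalized entropy H_L as a function of the probability vector (min is attained by assumption).\<close>
definition H_L :: "('y::finite \<Rightarrow> 'a \<Rightarrow> real) \<Rightarrow> real ^ 'y \<Rightarrow> real" where
  "H_L L p = (INF a. exp_loss L p a)"

definition L_div :: "('y::finite \<Rightarrow> 'a \<Rightarrow> real) \<Rightarrow> real ^ 'y \<Rightarrow> 'a \<Rightarrow> 'a \<Rightarrow> real" where
  "L_div L p aP aQ = exp_loss L p aQ - exp_loss L p aP"

text \<open>Neyman chi^2 divergence; +infinity if P(y)>0 = Q(y) for some y (0^2/0 = 0).\<close>
definition chi2_div :: "real ^ 'y::finite \<Rightarrow> real ^ 'y \<Rightarrow> ereal" where
  "chi2_div p q = (if \<exists>y. q $ y = 0 \<and> p $ y \<noteq> 0 then \<infinity>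
      else ereal (\<Sum>y\<in>{y. q $ y \<noteq> 0}. (p $ y - q $ y)^2 / q $ y))"

definition twice_diff_on_simplex :: "(real ^ 'y::finite \<Rightarrow> real) \<Rightarrow> bool" where
  "twice_diff_on_simplex f \<longleftrightarrow>
     (\<exists>f' :: (real ^ 'y) \<Rightarrow> ((real ^ 'y) \<Rightarrow>\<^sub>L real).
     \<exists>f'' :: (real ^ 'y) \<Rightarrow> ((real ^ 'y) \<Rightarrow> ((real ^ 'y) \<Rightarrow>\<^sub>L real)).
       \<forall>p\<in>prob_simplex.
         (f has_derivative blinfun_apply (f' p)) (at p within prob_simplex) \<and>
         (f' has_derivative f'' p) (at p within prob_simplex))"

end

theory Submission
  imports Defs
begin

lemma exp_loss_lin:
  "exp_loss L (a *\<^sub>R p + b *\<^sub>R q) x = a * exp_loss L p x + b * exp_loss L q x"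
  unfolding exp_loss_def by (simp add: sum_distrib_left sum.distrib algebra_simps)

lemma H_eq: "bayes_action L p a \<Longrightarrow> H_L L p = exp_loss L p a"
  unfolding H_L_def bayes_action_def by (rule cInf_eq_minimum) auto

lemma simplex_le1: assumes "p \<in> prob_simplex" shows "p $ y \<le> 1"
proof -
  have "p $ y \<le> (\<Sum>z\<in>UNIV. p $ z)"
    using assms unfolding prob_simplex_def by (intro member_le_sum) auto
  thus ?thesis using assms unfolding prob_simplex_def by simp
qed

lemma chi2_facts:
  assumes "chi2_div P Q \<le> ereal (\<beta>^2)" "Q \<in> prob_simplex"
  shows "\<And>y. Q$y = 0 \<Longrightarrow> P$y = 0" and "\<And>y. Q$y \<noteq> 0 \<Longrightarrow> (P$y - Q$y)^2 \<le> \<beta>^2 * Q$y"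
proof -
  have nz: "\<not>(\<exists>y. Q $ y = 0 \<and> P $ y \<noteq> 0)"
  proof
    assume ex: "\<exists>y. Q $ y = 0 \<and> P $ y \<noteq> 0"
    hence "chi2_div P Q = \<infinity>" unfolding chi2_div_def by (simp only: if_True)
    with assms(1) show False by simp
  qed
  then show "\<And>y. Q$y = 0 \<Longrightarrow> P$y = 0" by blast
  have "chi2_div P Q = ereal (\<Sum>y\<in>{y. Q $ y \<noteq> 0}. (P $ y - Q $ y)^2 / Q $ y)"
    using nz unfolding chi2_div_def by (simp only: if_False)
  with assms(1) have S: "(\<Sum>y\<in>{y. Q $ y \<noteq> 0}. (P $ y - Q $ y)^2 / Q $ y) \<le> \<beta>^2"
    by simp
  fix y assume y: "Q$y \<noteq> 0"
  have Qnn: "\<And>z. Q$z \<ge> 0" using assms(2) unfolding prob_simplex_def by blast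
  have qp: "Q$y > 0" using y Qnn[of y] by simp
  have "(P $ y - Q $ y)^2 / Q $ y \<le> (\<Sum>y\<in>{y. Q $ y \<noteq> 0}. (P $ y - Q $ y)^2 / Q $ y)"
  proof (rule member_le_sum)
    show "y \<in> {y. Q $ y \<noteq> 0}" using y by simp
    show "finite {y. Q $ y \<noteq> 0}" by simp
    fix x show "0 \<le> (P $ x - Q $ x)^2 / Q $ x" using Qnn[of x] by simp
  qed
  with S have "(P $ y - Q $ y)^2 / Q $ y \<le> \<beta>^2" by simp
  thus "(P$y - Q$y)^2 \<le> \<beta>^2 * Q$y" using qp by (simp add: divide_le_eq)
qed

lemma norm_sq_vec: "(norm (v::real^'y::finite))^2 = (\<Sum>y\<in>UNIV. (v$y)^2)"
  unfolding power2_norm_eq_inner inner_vec_def by (simp add: power2_eq_square)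

lemma chi2_norm:
  assumes "chi2_div P Q \<le> ereal (\<beta>^2)" "Q \<in> prob_simplex" "\<beta> \<ge> 0"
  shows "norm (P - Q) \<le> \<beta>"
proof -
  have "\<And>y. (P$y - Q$y)^2 \<le> \<beta>^2 * Q$y"
  proof -
    fix y show "(P$y - Q$y)^2 \<le> \<beta>^2 * Q$y"
      using chi2_facts[OF assms(1,2), of y] by (cases "Q$y = 0") simp_all
  qed
  hence "(\<Sum>y\<in>UNIV. ((P-Q)$y)^2) \<le> (\<Sum>y\<in>UNIV. \<beta>^2 * Q$y)"
    by (intro sum_mono) simp
  also have "\<dots> = \<beta>^2 * (\<Sum>y\<in>UNIV. Q$y)" by (simp add: sum_distrib_left)
  also have "\<dots> = \<beta>^2" using assms(2) unfolding prob_simplex_def by simp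
  finally have "(\<Sum>y\<in>UNIV. ((P-Q)$y)^2) \<le> \<beta>^2" .
  hence "(norm (P-Q))^2 \<le> \<beta>^2" by (subst norm_sq_vec)
  thus ?thesis by (rule power2_le_imp_le[OF _ assms(3)])
qed

lemma lower_bound:
  assumes attained: "\<forall>p\<in>prob_simplex. \<exists>a. bayes_action L p a"
  shows "\<exists>B. \<forall>y b. B y \<le> L y b"
proof -
  have "\<forall>y. \<exists>c. \<forall>b. c \<le> L y b"
  proof
    fix y
    have "axis y 1 \<in> (prob_simplex :: (real^'a) set)"
      unfolding prob_simplex_def by (simp add: axis_def)
    then obtain a where "bayes_action L (axis y 1) a" using attained by blast
    moreover have "\<And>b. exp_loss L (axis y 1) b = L y b"
      unfolding exp_loss_def axis_def by (simp add: if_distrib[of "\<lambda>c. c * _"] sum.delta cong: if_cong)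
    ultimately have "\<forall>b. L y a \<le> L y b"
      unfolding bayes_action_def by simp
    thus "\<exists>c. \<forall>b. c \<le> L y b" by blast
  qed
  thus ?thesis by (rule choice)
qed

lemma exp_loss_add: "exp_loss L (p + q) a = exp_loss L p a + exp_loss L q a"
  unfolding exp_loss_def by (simp add: sum.distrib algebra_simps)
lemma exp_loss_diff: "exp_loss L (p - q) a = exp_loss L p a - exp_loss L q a"
  unfolding exp_loss_def by (simp add: sum_subtractf algebra_simps)
lemma exp_loss_scale: "exp_loss L (c *\<^sub>R p) a = c * exp_loss L p a"
  unfolding exp_loss_def by (simp add: sum_distrib_left algebra_simps)

lemma q0_exists:
  assumes "Q \<in> prob_simplex"
  shows "\<exists>q0>0. \<forall>y. Q$y \<noteq> 0 \<longrightarrow> q0 \<le> Q$y"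
proof -
  define S where "S = (\<lambda>y. Q$y) ` {y. Q$y \<noteq> 0}"
  have fin: "finite S" unfolding S_def by simp
  have ne: "S \<noteq> {}"
  proof
    assume "S = {}"
    hence "\<forall>y. Q$y = 0" unfolding S_def by auto
    thus False using assms unfolding prob_simplex_def by simp
  qed
  have pos: "\<forall>x\<in>S. x > 0" using assms unfolding S_def prob_simplex_def
    by (auto simp: less_le)
  show ?thesis
  proof (intro exI[of _ "Min S"] conjI allI impI)
    show "Min S > 0" using fin ne pos by simp
    fix y assume "Q$y \<noteq> 0"
    thus "Min S \<le> Q$y" using fin unfolding S_def by (intro Min_le) auto
  qed
qed

lemma Ldiv_nonneg: "bayes_action L P aP \<Longrightarrow> L_div L P aP aQ \<ge> 0"
  unfolding L_div_def bayes_action_def by simp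

lemma part_a:
  fixes L :: "'y::finite \<Rightarrow> 'a \<Rightarrow> real"
    and Q :: "real ^ 'y" and aQ :: 'a
  assumes attained: "\<forall>p\<in>prob_simplex. \<exists>a. bayes_action L p a"
    and Q: "Q \<in> prob_simplex"
    and aQ: "bayes_action L Q aQ"
  shows "\<exists>C \<delta>. \<delta> > 0 \<and> (\<forall>\<beta>. 0 < \<beta> \<and> \<beta> < \<delta> \<longrightarrow>
            (\<forall>P\<in>prob_simplex. \<forall>aP. bayes_action L P aP \<and> chi2_div P Q \<le> ereal (\<beta>^2)
               \<longrightarrow> \<bar>L_div L P aP aQ\<bar> \<le> C * \<beta>))"
proof -
  obtain B where B: "\<And>y b. B y \<le> L y b" using lower_bound[OF attained] by blast
  obtain q0 where q0: "q0 > 0" "\<And>y. Q$y \<noteq> 0 \<Longrightarrow> q0 \<le> Q$y" using q0_exists[OF Q] by blast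
  define s where "s = sqrt q0"
  have s: "s > 0" "s^2 = q0" using q0 unfolding s_def by auto
  define M where "M = (\<Sum>y\<in>UNIV. \<bar>L y aQ\<bar>) + (\<Sum>y\<in>UNIV. \<bar>B y\<bar>)"
  have Qnn: "\<And>y. Q$y \<ge> 0" using Q unfolding prob_simplex_def by auto
  have Qs: "(\<Sum>y\<in>UNIV. Q$y) = 1" using Q unfolding prob_simplex_def by auto
  show ?thesis
  proof (rule exI[of _ "M / s"], rule exI[of _ s], intro conjI allI impI ballI)
    show "s > 0" by (fact s)
    fix \<beta> :: real and P :: "real^'y" and aP :: 'a
    assume b: "0 < \<beta> \<and> \<beta> < s" and P: "P \<in> prob_simplex"
      and H: "bayes_action L P aP \<and> chi2_div P Q \<le> ereal (\<beta>^2)"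
    define t where "t = \<beta> / s"
    have t: "0 < t" "t < 1" using b s unfolding t_def by auto
    have t2: "t^2 = \<beta>^2 / q0" unfolding t_def using s by (simp add: power_divide)
    have Pnn: "\<And>y. P$y \<ge> 0" using P unfolding prob_simplex_def by auto
    have Ps: "(\<Sum>y\<in>UNIV. P$y) = 1" using P unfolding prob_simplex_def by auto
    define R where "R = Q + (1/t) *\<^sub>R (P - Q)"
    have Rnn: "R$y \<ge> 0" for y
    proof (cases "Q$y = 0")
      case True
      then show ?thesis using chi2_facts(1)[OF conjunct2[OF H] Q] unfolding R_def by simp
    next
      case False
      have sq: "(P$y - Q$y)^2 \<le> \<beta>^2 * Q$y" using chi2_facts(2)[OF conjunct2[OF H] Q False] .
      have qy: "Q$y > 0" using False Qnn less_le by metis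
      have key: "Q$y - P$y \<le> t * Q$y"
      proof (cases "Q$y - P$y \<le> 0")
        case True then show ?thesis using t qy by (smt (verit) mult_nonneg_nonneg)
      next
        case False
        have qle: "1 \<le> Q$y / q0" using q0 \<open>Q$y \<noteq> 0\<close> by (simp add: le_divide_eq)
        have "(Q$y - P$y)^2 = (P$y - Q$y)^2" by (rule power2_commute)
        also have "\<dots> \<le> \<beta>^2 * Q$y" by (rule sq)
        also have "\<dots> = \<beta>^2 * Q$y * 1" by simp
        also have "\<dots> \<le> \<beta>^2 * Q$y * (Q$y / q0)"
          using qle qy by (intro mult_left_mono) auto
        also have "\<dots> = (t * Q$y)^2" using t2 q0 by (simp add: power2_eq_square field_simps)
        finally have "(Q$y - P$y)^2 \<le> (t * Q$y)^2" .
        moreover have tq: "0 \<le> t * Q$y" using t qy by simp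
        ultimately show ?thesis by (rule power2_le_imp_le)
      qed
      have "0 \<le> t * Q$y + (P$y - Q$y)" using key by simp
      hence "0 \<le> (t * Q$y + (P$y - Q$y)) / t" using t by simp
      also have "\<dots> = R$y" unfolding R_def using t by (simp add: field_simps)
      finally show ?thesis .
    qed
    have "(\<Sum>y\<in>UNIV. R$y) = (\<Sum>y\<in>UNIV. Q$y) + (1/t) * ((\<Sum>y\<in>UNIV. P$y) - (\<Sum>y\<in>UNIV. Q$y))"
      unfolding R_def by (simp add: sum.distrib sum_divide_distrib[symmetric] sum_subtractf)
    hence Rs: "(\<Sum>y\<in>UNIV. R$y) = 1" using Qs Ps by simp
    have Rin: "R \<in> prob_simplex" using Rnn Rs unfolding prob_simplex_def by auto
    have Rle1: "\<And>y. R$y \<le> 1" using simplex_le1[OF Rin] .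
    have Peq: "P = (1 - t) *\<^sub>R Q + t *\<^sub>R R"
      unfolding R_def using t by (simp add: vec_eq_iff field_simps)
    have EP: "\<And>a. exp_loss L P a = (1 - t) * exp_loss L Q a + t * exp_loss L R a"
      by (subst Peq, rule exp_loss_lin)
    have EQ: "exp_loss L Q aQ \<le> exp_loss L Q aP" using aQ unfolding bayes_action_def by auto
    have ER1: "exp_loss L R aQ \<le> (\<Sum>y\<in>UNIV. \<bar>L y aQ\<bar>)"
      unfolding exp_loss_def
    proof (rule sum_mono)
      fix y
      have "R$y * L y aQ \<le> R$y * \<bar>L y aQ\<bar>" using Rnn[of y] by (intro mult_left_mono) auto
      also have "\<dots> \<le> 1 * \<bar>L y aQ\<bar>" using Rle1[of y] by (intro mult_right_mono) auto
      finally show "R$y * L y aQ \<le> \<bar>L y aQ\<bar>" by simp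
    qed
    have ER2: "- (\<Sum>y\<in>UNIV. \<bar>B y\<bar>) \<le> exp_loss L R aP"
      unfolding exp_loss_def sum_negf[symmetric]
    proof (rule sum_mono)
      fix y
      have "- \<bar>B y\<bar> \<le> R$y * (- \<bar>B y\<bar>)" using Rle1[of y] Rnn[of y]
        by (smt (verit) mult_left_le_one_le abs_ge_zero mult_minus_right)
      also have "\<dots> \<le> R$y * L y aP" using Rnn[of y] B[of y aP] by (intro mult_left_mono) auto
      finally show "- \<bar>B y\<bar> \<le> R$y * L y aP" .
    qed
    have "L_div L P aP aQ = (1 - t) * (exp_loss L Q aQ - exp_loss L Q aP) + t * (exp_loss L R aQ - exp_loss L R aP)"
      unfolding L_div_def EP by (simp add: algebra_simps)
    also have "\<dots> \<le> t * (exp_loss L R aQ - exp_loss L R aP)"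
    proof -
      have "(1 - t) * (exp_loss L Q aQ - exp_loss L Q aP) \<le> 0"
        using EQ t by (intro mult_nonneg_nonpos) auto
      thus ?thesis by linarith
    qed
    also have "\<dots> \<le> t * M" unfolding M_def using ER1 ER2 t by (intro mult_left_mono) auto
    also have "\<dots> = M / s * \<beta>" unfolding t_def by simp
    finally show "\<bar>L_div L P aP aQ\<bar> \<le> M / s * \<beta>" using Ldiv_nonneg[of L P aP aQ] H by simp
  qed
qed


lemma simplex_comb:
  assumes "p \<in> prob_simplex" "q \<in> prob_simplex" "a \<ge> 0" "b \<ge> 0" "a + b = 1"
  shows "a *\<^sub>R p + b *\<^sub>R q \<in> prob_simplex"
proof -
  have pn: "\<And>y. p$y \<ge> 0" and ps: "(\<Sum>y\<in>UNIV. p$y) = 1"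
    using assms(1) unfolding prob_simplex_def by blast+
  have qn: "\<And>y. q$y \<ge> 0" and qs: "(\<Sum>y\<in>UNIV. q$y) = 1"
    using assms(2) unfolding prob_simplex_def by blast+
  have nn: "\<And>y. (a *\<^sub>R p + b *\<^sub>R q)$y \<ge> 0"
  proof -
    fix y
    have "0 \<le> a * p$y" using assms(3) pn[of y] by (rule mult_nonneg_nonneg)
    moreover have "0 \<le> b * q$y" using assms(4) qn[of y] by (rule mult_nonneg_nonneg)
    ultimately show "(a *\<^sub>R p + b *\<^sub>R q)$y \<ge> 0" by simp
  qed
  have "(\<Sum>y\<in>UNIV. (a *\<^sub>R p + b *\<^sub>R q)$y) = a * (\<Sum>y\<in>UNIV. p$y) + b * (\<Sum>y\<in>UNIV. q$y)"
    by (simp add: sum.distrib sum_distrib_left)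
  also have "\<dots> = 1" using ps qs assms(5) by simp
  finally show ?thesis using nn unfolding prob_simplex_def by blast
qed

lemma part_b:
  fixes L :: "'y::finite \<Rightarrow> 'a \<Rightarrow> real"
    and Q :: "real ^ 'y" and aQ :: 'a
  assumes attained: "\<forall>p\<in>prob_simplex. \<exists>a. bayes_action L p a"
    and Q: "Q \<in> prob_simplex"
    and aQ: "bayes_action L Q aQ"
    and td: "twice_diff_on_simplex (H_L L)"
  shows "\<exists>C \<delta>. \<delta> > 0 \<and> (\<forall>\<beta>. 0 < \<beta> \<and> \<beta> < \<delta> \<longrightarrow>
            (\<forall>P\<in>prob_simplex. \<forall>aP. bayes_action L P aP \<and> chi2_div P Q \<le> ereal (\<beta>^2)
               \<longrightarrow> \<bar>L_div L P aP aQ\<bar> \<le> C * \<beta>^2))"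
proof -
  obtain H' :: "real^'y \<Rightarrow> ((real^'y) \<Rightarrow>\<^sub>L real)" and H'' where
    D: "\<forall>p\<in>prob_simplex. (H_L L has_derivative blinfun_apply (H' p)) (at p within prob_simplex) \<and>
         (H' has_derivative H'' p) (at p within prob_simplex)"
    using td unfolding twice_diff_on_simplex_def by blast
  have D1: "\<And>p. p \<in> prob_simplex \<Longrightarrow> (H_L L has_derivative blinfun_apply (H' p)) (at p within prob_simplex)"
    using D by blast
  have D2: "(H' has_derivative H'' Q) (at Q within prob_simplex)" using D Q by blast
  have bl: "bounded_linear (H'' Q)"
    and "\<forall>e>0. \<exists>d>0. \<forall>y\<in>prob_simplex. norm (y - Q) < d \<longrightarrow> norm (H' y - H' Q - H'' Q (y - Q)) \<le> e * norm (y - Q)"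
    using D2 unfolding has_derivative_within_alt by blast+
  then obtain r where r: "r > 0"
    and rb: "\<And>y. y \<in> prob_simplex \<Longrightarrow> norm (y - Q) < r \<Longrightarrow> norm (H' y - H' Q - H'' Q (y - Q)) \<le> 1 * norm (y - Q)"
    by (meson zero_less_one)
  obtain K0 where K0: "K0 > 0" "\<And>x. norm (H'' Q x) \<le> norm x * K0"
    using bounded_linear.pos_bounded[OF bl] by blast
  define K where "K = K0 + 1"
  have K: "K \<ge> 0" unfolding K_def using K0 by simp
  have Kb: "norm (H' y - H' Q) \<le> K * norm (y - Q)" if "y \<in> prob_simplex" "norm (y - Q) < r" for y
  proof -
    have "H' y - H' Q = (H' y - H' Q - H'' Q (y - Q)) + H'' Q (y - Q)" by simp
    hence "norm (H' y - H' Q) \<le> norm (H' y - H' Q - H'' Q (y - Q)) + norm (H'' Q (y - Q))"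
      by (metis norm_triangle_ineq)
    also have "\<dots> \<le> 1 * norm (y - Q) + norm (y - Q) * K0"
      using rb[OF that] K0(2)[of "y - Q"] by (rule add_mono)
    also have "\<dots> = K * norm (y - Q)" unfolding K_def by (simp add: algebra_simps)
    finally show ?thesis .
  qed
  obtain q0 where q0: "q0 > 0" "\<And>y. Q$y \<noteq> 0 \<Longrightarrow> q0 \<le> Q$y" using q0_exists[OF Q] by blast
  define s where "s = sqrt q0"
  have s: "s > 0" "s^2 = q0" using q0 unfolding s_def by auto
  have Qnn: "\<And>y. Q$y \<ge> 0" using Q unfolding prob_simplex_def by blast
  have Qs: "(\<Sum>y\<in>UNIV. Q$y) = 1" using Q unfolding prob_simplex_def by blast
  show ?thesis
  proof (rule exI[of _ "2 * K"], rule exI[of _ "min s r"], intro conjI allI impI ballI)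
    show "min s r > 0" using s r by simp
    fix \<beta> :: real and P :: "real^'y" and aP :: 'a
    assume b: "0 < \<beta> \<and> \<beta> < min s r" and P: "P \<in> prob_simplex"
      and H: "bayes_action L P aP \<and> chi2_div P Q \<le> ereal (\<beta>^2)"
    have aP: "bayes_action L P aP" and chi: "chi2_div P Q \<le> ereal (\<beta>^2)" using H by blast+
    have b0: "0 < \<beta>" and bs: "\<beta> < s" and br: "\<beta> < r" using b by auto
    have Pnn: "\<And>y. P$y \<ge> 0" using P unfolding prob_simplex_def by blast
    have Ps: "(\<Sum>y\<in>UNIV. P$y) = 1" using P unfolding prob_simplex_def by blast
    define v where "v = P - Q"
    define P' where "P' = Q - v"
    have bq: "\<beta>^2 \<le> q0" using b0 bs s(2) by (metis less_imp_le power_mono)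
    have P'nn: "P'$y \<ge> 0" for y
    proof (cases "Q$y = 0")
      case True
      then show ?thesis using chi2_facts(1)[OF chi Q] unfolding P'_def v_def by simp
    next
      case False
      have sq: "(P$y - Q$y)^2 \<le> \<beta>^2 * Q$y" using chi2_facts(2)[OF chi Q False] .
      also have "\<dots> \<le> q0 * Q$y" using bq Qnn[of y] by (rule mult_right_mono)
      also have "\<dots> \<le> Q$y * Q$y" using q0(2)[OF False] Qnn[of y] by (rule mult_right_mono)
      also have "\<dots> = (Q$y)^2" by (simp add: power2_eq_square)
      finally have "(P$y - Q$y)^2 \<le> (Q$y)^2" .
      hence "P$y - Q$y \<le> Q$y" using Qnn[of y] by (rule power2_le_imp_le)
      thus ?thesis unfolding P'_def v_def by simp
    qed
    have "(\<Sum>y\<in>UNIV. P'$y) = (\<Sum>y\<in>UNIV. Q$y) - ((\<Sum>y\<in>UNIV. P$y) - (\<Sum>y\<in>UNIV. Q$y))"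
      unfolding P'_def v_def by (simp add: sum_subtractf sum_distrib_left)
    hence P's: "(\<Sum>y\<in>UNIV. P'$y) = 1" using Qs Ps by simp
    have P'in: "P' \<in> prob_simplex" using P'nn P's unfolding prob_simplex_def by blast
    obtain a' where a': "bayes_action L P' a'" using attained P'in by blast
    have nv: "norm v \<le> \<beta>" unfolding v_def using chi2_norm[OF chi Q] b0 by simp
    have seg: "Q + \<sigma> *\<^sub>R v \<in> prob_simplex" if "-1 \<le> \<sigma>" "\<sigma> \<le> 1" for \<sigma>
    proof (cases "\<sigma> \<ge> 0")
      case True
      have "Q + \<sigma> *\<^sub>R v = (1 - \<sigma>) *\<^sub>R Q + \<sigma> *\<^sub>R P" unfolding v_def by (simp add: algebra_simps)
      moreover have "(1 - \<sigma>) *\<^sub>R Q + \<sigma> *\<^sub>R P \<in> prob_simplex"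
        using Q P True that by (intro simplex_comb) auto
      ultimately show ?thesis by simp
    next
      case False
      have "Q + \<sigma> *\<^sub>R v = (1 + \<sigma>) *\<^sub>R Q + (-\<sigma>) *\<^sub>R P'" unfolding P'_def by (simp add: algebra_simps)
      moreover have "(1 + \<sigma>) *\<^sub>R Q + (-\<sigma>) *\<^sub>R P' \<in> prob_simplex"
        using Q P'in False that by (intro simplex_comb) auto
      ultimately show ?thesis by simp
    qed
    define \<psi> where "\<psi> = (\<lambda>\<sigma>. H_L L (Q + \<sigma> *\<^sub>R v))"
    have dpsi: "(\<psi> has_derivative (\<lambda>h. blinfun_apply (H' (Q + x *\<^sub>R v)) (h *\<^sub>R v))) (at x within {a..b})"
      if "-1 \<le> a" "b \<le> 1" "a \<le> x" "x \<le> b" for a b x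
    proof -
      have lin: "((\<lambda>\<sigma>. Q + \<sigma> *\<^sub>R v) has_derivative (\<lambda>h. h *\<^sub>R v)) (at x within {a..b})"
        by (intro derivative_eq_intros) auto
      have sub: "(\<lambda>\<sigma>. Q + \<sigma> *\<^sub>R v) ` {a..b} \<subseteq> prob_simplex"
        using that seg by auto
      have "x \<in> {a..b}" using that by simp
      from has_derivative_in_compose2[of prob_simplex "H_L L" "\<lambda>p. blinfun_apply (H' p)", OF D1 sub this lin]
      show ?thesis unfolding \<psi>_def by simp
    qed
    obtain \<xi>1 where \<xi>1: "\<xi>1 \<in> {0<..<1}"
      and m1: "\<psi> 1 - \<psi> 0 = blinfun_apply (H' (Q + \<xi>1 *\<^sub>R v)) ((1 - 0) *\<^sub>R v)"
      using mvt_simple[of 0 1 \<psi> "\<lambda>x h. blinfun_apply (H' (Q + x *\<^sub>R v)) (h *\<^sub>R v)"] dpsi[of 0 1] by auto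
    obtain \<xi>2 where \<xi>2: "\<xi>2 \<in> {-1<..<0}"
      and m2: "\<psi> 0 - \<psi> (-1) = blinfun_apply (H' (Q + \<xi>2 *\<^sub>R v)) ((0 - -1) *\<^sub>R v)"
      using mvt_simple[of "-1" 0 \<psi> "\<lambda>x h. blinfun_apply (H' (Q + x *\<^sub>R v)) (h *\<^sub>R v)"] dpsi[of "-1" 0] by auto
    have bnd: "\<bar>blinfun_apply (H' (Q + \<xi> *\<^sub>R v) - H' Q) v\<bar> \<le> K * (norm v)^2"
      if "-1 \<le> \<xi>" "\<xi> \<le> 1" for \<xi>
    proof -
      have n1: "norm (Q + \<xi> *\<^sub>R v - Q) \<le> norm v"
      proof -
        have "norm (Q + \<xi> *\<^sub>R v - Q) = \<bar>\<xi>\<bar> * norm v" by simp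
        also have "\<dots> \<le> 1 * norm v" using that by (intro mult_right_mono) auto
        finally show ?thesis by simp
      qed
      have n2: "norm (Q + \<xi> *\<^sub>R v - Q) < r" using n1 nv br by linarith
      have "\<bar>blinfun_apply (H' (Q + \<xi> *\<^sub>R v) - H' Q) v\<bar> \<le> norm (H' (Q + \<xi> *\<^sub>R v) - H' Q) * norm v"
        using norm_blinfun[of "H' (Q + \<xi> *\<^sub>R v) - H' Q" v] by simp
      also have "\<dots> \<le> (K * norm (Q + \<xi> *\<^sub>R v - Q)) * norm v"
        using Kb[OF seg[OF that] n2] by (intro mult_right_mono) auto
      also have "\<dots> \<le> (K * norm v) * norm v"
        using n1 K by (intro mult_right_mono mult_left_mono) auto
      also have "\<dots> = K * (norm v)^2" by (simp add: power2_eq_square)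
      finally show ?thesis .
    qed
    have b1: "\<bar>blinfun_apply (H' (Q + \<xi>1 *\<^sub>R v) - H' Q) v\<bar> \<le> K * (norm v)^2"
      using \<xi>1 by (intro bnd) auto
    have b2: "\<bar>blinfun_apply (H' (Q + \<xi>2 *\<^sub>R v) - H' Q) v\<bar> \<le> K * (norm v)^2"
      using \<xi>2 by (intro bnd) auto
    have e1: "blinfun_apply (H' (Q + \<xi>1 *\<^sub>R v) - H' Q) v = blinfun_apply (H' (Q + \<xi>1 *\<^sub>R v)) v - blinfun_apply (H' Q) v"
      by (simp add: blinfun.diff_left)
    have e2: "blinfun_apply (H' (Q + \<xi>2 *\<^sub>R v) - H' Q) v = blinfun_apply (H' (Q + \<xi>2 *\<^sub>R v)) v - blinfun_apply (H' Q) v"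
      by (simp add: blinfun.diff_left)
    have m1': "\<psi> 1 - \<psi> 0 = blinfun_apply (H' (Q + \<xi>1 *\<^sub>R v)) v" using m1 by simp
    have m2': "\<psi> 0 - \<psi> (-1) = blinfun_apply (H' (Q + \<xi>2 *\<^sub>R v)) v" using m2 by simp
    have p1: "\<psi> 1 = exp_loss L P aP" unfolding \<psi>_def v_def using H_eq[OF aP] by simp
    have p0: "\<psi> 0 = exp_loss L Q aQ" unfolding \<psi>_def using H_eq[OF aQ] by simp
    have pm: "\<psi> (-1) = exp_loss L P' a'" using H_eq[OF a'] unfolding \<psi>_def P'_def by simp
    have ea: "exp_loss L P' a' \<le> exp_loss L P' aQ" using a' unfolding bayes_action_def by blast
    have lin: "exp_loss L P' aQ = 2 * exp_loss L Q aQ - exp_loss L P aQ"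
      unfolding P'_def v_def exp_loss_diff by simp
    have "L_div L P aP aQ \<le> 2 * \<psi> 0 - \<psi> (-1) - \<psi> 1"
      unfolding L_div_def p1 p0 pm using ea lin by linarith
    also have "\<dots> = (\<psi> 0 - \<psi> (-1)) - (\<psi> 1 - \<psi> 0)" by simp
    also have "\<dots> = blinfun_apply (H' (Q + \<xi>2 *\<^sub>R v) - H' Q) v - blinfun_apply (H' (Q + \<xi>1 *\<^sub>R v) - H' Q) v"
      unfolding m1' m2' e1 e2 by simp
    also have "\<dots> \<le> K * (norm v)^2 + K * (norm v)^2" using b1 b2 by linarith
    also have "\<dots> = 2 * K * (norm v)^2" by simp
    also have "\<dots> \<le> 2 * K * \<beta>^2"
      using nv K by (intro mult_left_mono power_mono) auto
    finally show "\<bar>L_div L P aP aQ\<bar> \<le> 2 * K * \<beta>^2" using Ldiv_nonneg[of L P aP aQ] aP by simp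
  qed
qed


theorem lemma8p2:
  fixes L :: "'y::finite \<Rightarrow> 'a \<Rightarrow> real"
    and Q :: "real ^ 'y" and aQ :: 'a
  assumes attained: "\<forall>p\<in>prob_simplex. \<exists>a. bayes_action L p a"
    and Q: "Q \<in> prob_simplex"
    and aQ: "bayes_action L Q aQ"
  shows "(\<exists>C \<delta>. \<delta> > 0 \<and> (\<forall>\<beta>. 0 < \<beta> \<and> \<beta> < \<delta> \<longrightarrow>
            (\<forall>P\<in>prob_simplex. \<forall>aP. bayes_action L P aP \<and> chi2_div P Q \<le> ereal (\<beta>^2)
               \<longrightarrow> \<bar>L_div L P aP aQ\<bar> \<le> C * \<beta>)))
       \<and> (twice_diff_on_simplex (H_L L) \<longrightarrow>
          (\<exists>C \<delta>. \<delta> > 0 \<and> (\<forall>\<beta>. 0 < \<beta> \<and> \<beta> < \<delta> \<longrightarrow>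
            (\<forall>P\<in>prob_simplex. \<forall>aP. bayes_action L P aP \<and> chi2_div P Q \<le> ereal (\<beta>^2)
               \<longrightarrow> \<bar>L_div L P aP aQ\<bar> \<le> C * \<beta>^2))))"
  using part_a[OF attained Q aQ] part_b[OF attained Q aQ] by blast

end
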